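(* Let $G$ be a game all of whose options are numbers, with $L(G)\neq\emptyset$ and $R(G)\neq\emptyset$. Then there are numbers $a,b$ in canonical form such that $G\triangleq\{a\mid b\}$.
   Context: Games are short normal-play combinatorial games, written $G\cong\{L(G)\mid R(G)\}$. A number is a game $G$ with $G^L<G<G^R$ for all $G^L\in L(G)$, $G^R\in R(G)$; every game has a unique simplest representative of its value, its canonical form. Disjunctive sum and negation are the usual ones: $G+H\cong\{L(G)+H,G+L(H)\mid R(G)+H,G+R(H)\}$, $-G\cong\{-R(G)\mid-L(G)\}$. Equivalence modulo domination: $G\triangleq H$ means that in $G+(-H)$, for every move by either player as first player in one summand, the other player has a response in the other summand after which the responder wins. *)

theory Defs
  imports Main "HOL-Library.FSet"
begin

datatype game = Game (lefts: "game fset") (rights: "game fset")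

lemma size_fset_mem_le:
  "x |\<in>| A \<Longrightarrow> size x < (\<Sum>y\<in>fset A. Suc (size y))"
proof -
  assume "x |\<in>| A"
  then have "Suc (size x) \<le> (\<Sum>y\<in>fset A. Suc (size y))"
    by (intro member_le_sum) auto
  then show ?thesis by simp
qed

lemma size_mem_L:
  "x |\<in>| L \<Longrightarrow> size x < Suc ((\<Sum>y\<in>fset L. Suc (size y)) + (\<Sum>y\<in>fset R. Suc (size y)))"
  using size_fset_mem_le[of x L] by linarith

lemma size_mem_R:
  "x |\<in>| R \<Longrightarrow> size x < Suc ((\<Sum>y\<in>fset L. Suc (size y)) + (\<Sum>y\<in>fset R. Suc (size y)))"
  using size_fset_mem_le[of x R] by linarith

lemma size_game_lefts [termination_simp]:
  "x |\<in>| L \<Longrightarrow> size x < size (Game L R)"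
  using size_fset_mem_le[of x L] by simp

lemma size_game_rights [termination_simp]:
  "x |\<in>| R \<Longrightarrow> size x < size (Game L R)"
  using size_fset_mem_le[of x R] by simp

function neg :: "game \<Rightarrow> game" where
  "neg (Game L R) = Game (fimage neg R) (fimage neg L)"
  by pat_completeness auto
termination by (relation "measure size") (simp_all add: size_mem_L size_mem_R)

function plus :: "game \<Rightarrow> game \<Rightarrow> game" where
  "plus (Game L R) (Game L' R') =
     Game ((\<lambda>x. plus x (Game L' R')) |`| L |\<union>| (\<lambda>y. plus (Game L R) y) |`| L')
          ((\<lambda>x. plus x (Game L' R')) |`| R |\<union>| (\<lambda>y. plus (Game L R) y) |`| R')"
  by pat_completeness auto
termination
  by (relation "measure (\<lambda>(G, H). size G + size H)")
     (simp_all add: size_mem_L size_mem_R)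

text \<open>Normal play: \<open>wins True G\<close> means Left wins G moving first,
  \<open>wins False G\<close> means Right wins G moving first.\<close>
function wins :: "bool \<Rightarrow> game \<Rightarrow> bool" where
  "wins True (Game L R) = (\<exists>x\<in>fset L. \<not> wins False x)"
| "wins False (Game L R) = (\<exists>x\<in>fset R. \<not> wins True x)"
  by pat_completeness auto
termination by (relation "measure (size o snd)") (simp_all add: size_mem_L size_mem_R)

text \<open>Order: G \<le> H iff H + (-G) \<ge> 0, i.e. Right loses moving first in H + (-G).\<close>
definition game_le :: "game \<Rightarrow> game \<Rightarrow> bool" where
  "game_le G H \<longleftrightarrow> \<not> wins False (plus H (neg G))"

definition game_lt :: "game \<Rightarrow> game \<Rightarrow> bool" where
  "game_lt G H \<longleftrightarrow> game_le G H \<and> \<not> game_le H G"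

definition is_number :: "game \<Rightarrow> bool" where
  "is_number G \<longleftrightarrow> (\<forall>x. x |\<in>| lefts G \<longrightarrow> game_lt x G)
                   \<and> (\<forall>y. y |\<in>| rights G \<longrightarrow> game_lt G y)"

text \<open>Canonical form: hereditarily no dominated and no reversible options.\<close>
function canonical :: "game \<Rightarrow> bool" where
  "canonical (Game L R) \<longleftrightarrow>
     (\<forall>x. x |\<in>| L \<longrightarrow> canonical x) \<and> (\<forall>x. x |\<in>| R \<longrightarrow> canonical x)
   \<and> (\<forall>x y. x |\<in>| L \<longrightarrow> y |\<in>| L \<longrightarrow> x \<noteq> y \<longrightarrow> \<not> game_le x y)
   \<and> (\<forall>x y. x |\<in>| R \<longrightarrow> y |\<in>| R \<longrightarrow> x \<noteq> y \<longrightarrow> \<not> game_le y x)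
   \<and> (\<forall>x z. x |\<in>| L \<longrightarrow> z |\<in>| rights x \<longrightarrow> \<not> game_le z (Game L R))
   \<and> (\<forall>x z. x |\<in>| R \<longrightarrow> z |\<in>| lefts x \<longrightarrow> \<not> game_le (Game L R) z)"
  by pat_completeness auto
termination by (relation "measure size") (simp_all add: size_mem_L size_mem_R)

text \<open>Equivalence modulo domination G \<triangleq> H, read off the sum G + (-H):
  every first move in one summand has a reply in the other summand after which
  the replying player wins (the original mover, now to move, loses).\<close>
definition equiv_dom :: "game \<Rightarrow> game \<Rightarrow> bool" where
  "equiv_dom G H \<longleftrightarrow>
     (\<forall>x. x |\<in>| lefts G \<longrightarrow> (\<exists>y. y |\<in>| rights (neg H) \<and> \<not> wins True (plus x y)))
   \<and> (\<forall>x. x |\<in>| rights G \<longrightarrow> (\<exists>y. y |\<in>| lefts (neg H) \<and> \<not> wins False (plus x y)))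
   \<and> (\<forall>y. y |\<in>| lefts (neg H) \<longrightarrow> (\<exists>x. x |\<in>| rights G \<and> \<not> wins True (plus x y)))
   \<and> (\<forall>y. y |\<in>| rights (neg H) \<longrightarrow> (\<exists>x. x |\<in>| lefts G \<and> \<not> wins False (plus x y)))"

end

theory Submission
  imports Defs
begin

lemma neg_neg[simp]: "neg (neg x) = x"
  by (induction x rule: neg.induct) (auto simp: fset.map_comp fset.map_ident_strong)

lemma plus_comm: "plus x y = plus y x"
  by (induction x y rule: plus.induct) (auto simp: funion_commute intro!: fimage_cong)

lemma neg_plus: "neg (plus x y) = plus (neg x) (neg y)"
proof (induction x y rule: plus.induct)
  case (1 L R L' R')
  have a: "neg |`| ((\<lambda>x. plus x (Game L' R')) |`| R) = (\<lambda>x. plus x (neg (Game L' R'))) |`| (neg |`| R)"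
    using 1(3) by (simp add: fset.map_comp comp_def cong: fimage_cong)
  have b: "neg |`| ((\<lambda>y. plus (Game L R) y) |`| R') = (\<lambda>y. plus (neg (Game L R)) y) |`| (neg |`| R')"
    using 1(4) by (simp add: fset.map_comp comp_def cong: fimage_cong)
  have c: "neg |`| ((\<lambda>x. plus x (Game L' R')) |`| L) = (\<lambda>x. plus x (neg (Game L' R'))) |`| (neg |`| L)"
    using 1(1) by (simp add: fset.map_comp comp_def cong: fimage_cong)
  have d: "neg |`| ((\<lambda>y. plus (Game L R) y) |`| L') = (\<lambda>y. plus (neg (Game L R)) y) |`| (neg |`| L')"
    using 1(2) by (simp add: fset.map_comp comp_def cong: fimage_cong)
  show ?case using a b c d by (simp add: fimage_funion)
qed

lemma wins_neg: "wins b (neg x) = wins (\<not> b) x"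
proof (induction x arbitrary: b rule: neg.induct)
  case (1 L R)
  then show ?case by (cases b) auto
qed

lemma notwinsT: "(\<not> wins True (plus x (neg y))) = game_le x y"
proof -
  have "wins True (plus x (neg y)) = wins False (neg (plus x (neg y)))"
    using wins_neg[of False "plus x (neg y)"] by simp
  also have "neg (plus x (neg y)) = plus y (neg x)" by (simp add: neg_plus plus_comm)
  finally show ?thesis by (simp add: game_le_def)
qed

lemma notwinsF: "(\<not> wins False (plus x (neg y))) = game_le y x"
  by (simp add: game_le_def)

lemma le_char: "game_le G H \<longleftrightarrow>
   (\<forall>gl. gl |\<in>| lefts G \<longrightarrow> \<not> game_le H gl) \<and> (\<forall>hr. hr |\<in>| rights H \<longrightarrow> \<not> game_le hr G)"
proof -
  obtain L R where G: "G = Game L R" by (cases G)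
  obtain L' R' where H: "H = Game L' R'" by (cases H)
  have "game_le G H = (\<not> wins False (plus H (neg G)))" by (simp add: game_le_def)
  also have "\<dots> = (\<not> ((\<exists>hr\<in>fset R'. \<not> wins True (plus hr (neg G))) \<or> (\<exists>gl\<in>fset L. \<not> wins True (plus H (neg gl)))))"
    by (simp add: G H) (auto simp: G)
  finally show ?thesis unfolding notwinsT by (auto simp: G H)
qed

lemma size_lefts: "x |\<in>| lefts G \<Longrightarrow> size x < size G"
  by (cases G) (simp add: size_mem_L)

lemma size_rights: "x |\<in>| rights G \<Longrightarrow> size x < size G"
  by (cases G) (simp add: size_mem_R)

lemma le_refl: "game_le x x"
proof (induction x rule: measure_induct_rule[of size])
  case (less x)
  obtain L R where x: "x = Game L R" by (cases x)
  show ?case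
  proof (subst le_char, intro conjI allI impI)
    fix gl assume gl: "gl |\<in>| lefts x"
    have "size gl < size x" using gl by (rule size_lefts)
    then have "game_le gl gl" by (rule less)
    then show "\<not> game_le x gl" using gl by (subst le_char) auto
  next
    fix hr assume hr: "hr |\<in>| rights x"
    have "size hr < size x" using hr by (rule size_rights)
    then have "game_le hr hr" by (rule less)
    then show "\<not> game_le hr x" using hr by (subst le_char) auto
  qed
qed

lemma left_not_ge: "gl |\<in>| lefts G \<Longrightarrow> \<not> game_le G gl"
  using le_refl[of G] by (subst (asm) le_char) auto

lemma right_not_le: "hr |\<in>| rights G \<Longrightarrow> \<not> game_le hr G"
  using le_refl[of G] by (subst (asm) le_char) auto

lemma le_trans_aux: "\<forall>a b c. size a + size b + size c = n \<longrightarrow> game_le a b \<longrightarrow> game_le b c \<longrightarrow> game_le a c"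
proof (induction n rule: less_induct)
  case (less n)
  show ?case
  proof (intro allI impI)
    fix a b c assume n: "size a + size b + size c = n" and ab: "game_le a b" and bc: "game_le b c"
    show "game_le a c"
    proof (subst le_char, intro conjI allI impI notI)
      fix al assume al: "al |\<in>| lefts a" and cal: "game_le c al"
      have "game_le b al" using less[rule_format, OF _ refl bc cal] size_lefts[OF al] n by simp
      then show False using ab al by (subst (asm) le_char) auto
    next
      fix cr assume cr: "cr |\<in>| rights c" and cra: "game_le cr a"
      have "game_le cr b" using less[rule_format, OF _ refl cra ab] size_rights[OF cr] n by simp
      then show False using bc cr by (subst (asm) (2) le_char) auto
    qed
  qed
qed

lemma le_trans: "game_le a b \<Longrightarrow> game_le b c \<Longrightarrow> game_le a c"
  using le_trans_aux by blast

lemma sim_le: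
  assumes "\<And>l. l |\<in>| L \<Longrightarrow> \<exists>l'. l' |\<in>| L' \<and> game_le l l'"
      and "\<And>r'. r' |\<in>| R' \<Longrightarrow> \<exists>r. r |\<in>| R \<and> game_le r r'"
  shows "game_le (Game L R) (Game L' R')"
proof (subst le_char, intro conjI allI impI notI)
  fix l assume l: "l |\<in>| lefts (Game L R)" and h: "game_le (Game L' R') l"
  obtain l' where "l' |\<in>| L'" "game_le l l'" using assms(1) l by auto
  then show False using le_trans[OF h] left_not_ge[of l' "Game L' R'"] by auto
next
  fix r' assume r': "r' |\<in>| rights (Game L' R')" and h: "game_le r' (Game L R)"
  obtain r where "r |\<in>| R" "game_le r r'" using assms(2) r' by auto
  then show False using le_trans[OF _ h] right_not_le[of r "Game L R"] by auto
qed

definition geq :: "game \<Rightarrow> game \<Rightarrow> bool" where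
  "geq a b \<longleftrightarrow> game_le a b \<and> game_le b a"

lemma bypass_L:
  assumes x: "x |\<in>| L" and z: "z |\<in>| rights x" and zK: "game_le z (Game L R)"
  shows "geq (Game ((L |-| {|x|}) |\<union>| lefts z) R) (Game L R)"
proof -
  let ?K = "Game L R" and ?K' = "Game ((L |-| {|x|}) |\<union>| lefts z) R"
  have zK': "game_le z ?K'"
  proof (subst le_char, intro conjI allI impI notI)
    fix zl assume "zl |\<in>| lefts z" "game_le ?K' zl"
    then show False using left_not_ge[of zl ?K'] by auto
  next
    fix r assume r: "r |\<in>| rights ?K'" and "game_le r z"
    then have "game_le r ?K" using le_trans zK by blast
    then show False using right_not_le[of r ?K] r by auto
  qed
  have 1: "game_le ?K' ?K"
  proof (subst le_char, intro conjI allI impI notI)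
    fix l assume l: "l |\<in>| lefts ?K'" and h: "game_le ?K l"
    show False
    proof (cases "l |\<in>| L")
      case True then show ?thesis using h left_not_ge[of l ?K] by auto
    next
      case False
      then have "l |\<in>| lefts z" using l by auto
      moreover have "game_le z l" using le_trans[OF zK h] .
      ultimately show False using left_not_ge[of l z] by auto
    qed
  next
    fix r assume "r |\<in>| rights ?K" "game_le r ?K'"
    then show False using right_not_le[of r ?K'] by auto
  qed
  have 2: "game_le ?K ?K'"
  proof (subst le_char, intro conjI allI impI notI)
    fix l assume l: "l |\<in>| lefts ?K" and h: "game_le ?K' l"
    show False
    proof (cases "l = x")
      case True
      then have "\<not> game_le z ?K'" using h z by (subst (asm) le_char) auto
      then show False using zK' by simp
    next
      case False then show ?thesis using l h left_not_ge[of l ?K'] by auto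
    qed
  next
    fix r assume "r |\<in>| rights ?K'" "game_le r ?K"
    then show False using right_not_le[of r ?K] by auto
  qed
  show ?thesis using 1 2 by (simp add: geq_def)
qed

lemma bypass_R:
  assumes x: "x |\<in>| R" and z: "z |\<in>| lefts x" and zK: "game_le (Game L R) z"
  shows "geq (Game L ((R |-| {|x|}) |\<union>| rights z)) (Game L R)"
proof -
  let ?K = "Game L R" and ?K' = "Game L ((R |-| {|x|}) |\<union>| rights z)"
  have zK': "game_le ?K' z"
  proof (subst le_char, intro conjI allI impI notI)
    fix zr assume "zr |\<in>| rights z" "game_le zr ?K'"
    then show False using right_not_le[of zr ?K'] by auto
  next
    fix l assume l: "l |\<in>| lefts ?K'" and "game_le z l"
    then have "game_le ?K l" using le_trans zK by blast
    then show False using left_not_ge[of l ?K] l by auto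
  qed
  have 1: "game_le ?K ?K'"
  proof (subst le_char, intro conjI allI impI notI)
    fix r assume r: "r |\<in>| rights ?K'" and h: "game_le r ?K"
    show False
    proof (cases "r |\<in>| R")
      case True then show ?thesis using h right_not_le[of r ?K] by auto
    next
      case False
      then have "r |\<in>| rights z" using r by auto
      moreover have "game_le r z" using le_trans[OF h zK] .
      ultimately show False using right_not_le[of r z] by auto
    qed
  next
    fix l assume "l |\<in>| lefts ?K" "game_le ?K' l"
    then show False using left_not_ge[of l ?K'] by auto
  qed
  have 2: "game_le ?K' ?K"
  proof (subst le_char, intro conjI allI impI notI)
    fix r assume r: "r |\<in>| rights ?K" and h: "game_le r ?K'"
    show False
    proof (cases "r = x")
      case True
      then have "\<not> game_le ?K' z" using h z by (subst (asm) le_char) auto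
      then show False using zK' by simp
    next
      case False then show ?thesis using r h right_not_le[of r ?K'] by auto
    qed
  next
    fix l assume "l |\<in>| lefts ?K'" "game_le ?K l"
    then show False using left_not_ge[of l ?K] by auto
  qed
  show ?thesis using 1 2 by (simp add: geq_def)
qed

definition ssz :: "game fset \<Rightarrow> nat" where
  "ssz A = (\<Sum>y\<in>fset A. Suc (size y))"

lemma size_Game: "size (Game L R) = Suc (ssz L + ssz R)"
  by (simp add: ssz_def)

lemma ssz_remove: "x |\<in>| A \<Longrightarrow> ssz A = Suc (size x) + ssz (A |-| {|x|})"
  unfolding ssz_def by (simp add: sum.remove)

lemma ssz_insert_le: "ssz (finsert y A) \<le> Suc (size y) + ssz A"
  unfolding ssz_def by (simp add: sum.insert_if)

lemma ssz_union_le: "ssz (A |\<union>| B) \<le> ssz A + ssz B"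
proof -
  have "sum (\<lambda>y. Suc (size y)) (fset A \<union> fset B) + sum (\<lambda>y. Suc (size y)) (fset A \<inter> fset B)
        = sum (\<lambda>y. Suc (size y)) (fset A) + sum (\<lambda>y. Suc (size y)) (fset B)"
    by (rule sum.union_inter) auto
  then show ?thesis unfolding ssz_def by simp
qed

lemma ssz_lefts: "ssz (lefts z) < size z"
  by (cases z) (simp add: ssz_def)

lemma ssz_rights: "ssz (rights z) < size z"
  by (cases z) (simp add: ssz_def)

lemma geq_sym: "geq a b \<Longrightarrow> geq b a" by (simp add: geq_def)
lemma geq_trans: "geq a b \<Longrightarrow> geq b c \<Longrightarrow> geq a c"
  unfolding geq_def using le_trans by blast

lemma min_canonical:
  "(\<And>K'. geq K' K \<Longrightarrow> size K \<le> size K') \<Longrightarrow> canonical K"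
proof (induction K rule: measure_induct_rule[of size])
  case (less K)
  obtain L R where K: "K = Game L R" by (cases K)
  have minK: "\<And>K'. geq K' (Game L R) \<Longrightarrow> size (Game L R) \<le> size K'" using less.prems K by simp
  have optmin: "size x \<le> size x'" if x: "x |\<in>| L" and g: "geq x' x" for x x'
  proof (rule ccontr)
    assume "\<not> size x \<le> size x'"
    then have lt: "size x' < size x" by simp
    let ?K' = "Game (finsert x' (L |-| {|x|})) R"
    have "geq ?K' (Game L R)" unfolding geq_def
    proof
      show "game_le ?K' (Game L R)"
        by (rule sim_le) (use x g in \<open>auto simp: geq_def intro: le_refl\<close>)
      show "game_le (Game L R) ?K'"
        by (rule sim_le) (use x g in \<open>auto simp: geq_def intro: le_refl\<close>)
    qed
    moreover have "size ?K' < size (Game L R)"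
      using ssz_insert_le[of x' "L |-| {|x|}"] ssz_remove[OF x] lt by (simp only: size_Game; linarith)
    ultimately show False using minK by fastforce
  qed
  have optminR: "size x \<le> size x'" if x: "x |\<in>| R" and g: "geq x' x" for x x'
  proof (rule ccontr)
    assume "\<not> size x \<le> size x'"
    then have lt: "size x' < size x" by simp
    let ?K' = "Game L (finsert x' (R |-| {|x|}))"
    have "geq ?K' (Game L R)" unfolding geq_def
    proof
      show "game_le ?K' (Game L R)"
        by (rule sim_le) (use x g in \<open>auto simp: geq_def intro: le_refl\<close>)
      show "game_le (Game L R) ?K'"
        by (rule sim_le) (use x g in \<open>auto simp: geq_def intro: le_refl\<close>)
    qed
    moreover have "size ?K' < size (Game L R)"
      using ssz_insert_le[of x' "R |-| {|x|}"] ssz_remove[OF x] lt by (simp only: size_Game; linarith)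
    ultimately show False using minK by fastforce
  qed
  have c1: "canonical x" if x: "x |\<in>| L" for x
  proof (rule less.IH)
    show "size x < size K" using size_lefts[of x K] x K by simp
    show "\<And>K'. geq K' x \<Longrightarrow> size x \<le> size K'" using optmin[OF x] .
  qed
  have c2: "canonical x" if x: "x |\<in>| R" for x
  proof (rule less.IH)
    show "size x < size K" using size_rights[of x K] x K by simp
    show "\<And>K'. geq K' x \<Longrightarrow> size x \<le> size K'" using optminR[OF x] .
  qed
  have c3: "\<not> game_le x y" if x: "x |\<in>| L" and y: "y |\<in>| L" and xy: "x \<noteq> y" for x y
  proof
    assume le: "game_le x y"
    let ?K' = "Game (L |-| {|x|}) R"
    have "geq ?K' (Game L R)" unfolding geq_def
    proof
      show "game_le ?K' (Game L R)"
        by (rule sim_le) (auto intro: le_refl)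
      show "game_le (Game L R) ?K'"
        by (rule sim_le) (use x y xy le in \<open>auto intro: le_refl\<close>)
    qed
    moreover have "size ?K' < size (Game L R)"
      using ssz_remove[OF x] by (simp only: size_Game; linarith)
    ultimately show False using minK by fastforce
  qed
  have c4: "\<not> game_le y x" if x: "x |\<in>| R" and y: "y |\<in>| R" and xy: "x \<noteq> y" for x y
  proof
    assume le: "game_le y x"
    let ?K' = "Game L (R |-| {|x|})"
    have "geq ?K' (Game L R)" unfolding geq_def
    proof
      show "game_le ?K' (Game L R)"
        by (rule sim_le) (use x y xy le in \<open>auto intro: le_refl\<close>)
      show "game_le (Game L R) ?K'"
        by (rule sim_le) (auto intro: le_refl)
    qed
    moreover have "size ?K' < size (Game L R)"
      using ssz_remove[OF x] by (simp only: size_Game; linarith)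
    ultimately show False using minK by fastforce
  qed
  have c5: "\<not> game_le z (Game L R)" if x: "x |\<in>| L" and z: "z |\<in>| rights x" for x z
  proof
    assume le: "game_le z (Game L R)"
    let ?K' = "Game ((L |-| {|x|}) |\<union>| lefts z) R"
    have "geq ?K' (Game L R)" by (rule bypass_L[OF x z le])
    moreover have "size ?K' < size (Game L R)"
    proof -
      have "ssz (lefts z) < size x" using ssz_lefts[of z] size_rights[OF z] by simp
      then show ?thesis
        using ssz_union_le[of "L |-| {|x|}" "lefts z"] ssz_remove[OF x] by (simp only: size_Game; linarith)
    qed
    ultimately show False using minK by fastforce
  qed
  have c6: "\<not> game_le (Game L R) z" if x: "x |\<in>| R" and z: "z |\<in>| lefts x" for x z
  proof
    assume le: "game_le (Game L R) z"
    let ?K' = "Game L ((R |-| {|x|}) |\<union>| rights z)"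
    have "geq ?K' (Game L R)" by (rule bypass_R[OF x z le])
    moreover have "size ?K' < size (Game L R)"
    proof -
      have "ssz (rights z) < size x" using ssz_rights[of z] size_lefts[OF z] by simp
      then show ?thesis
        using ssz_union_le[of "R |-| {|x|}" "rights z"] ssz_remove[OF x] by (simp only: size_Game; linarith)
    qed
    ultimately show False using minK by fastforce
  qed
  show ?case unfolding K canonical.simps using c1 c2 c3 c4 c5 c6 by blast
qed

lemma canon_exists: "\<exists>K. canonical K \<and> geq K G"
proof -
  obtain K where K: "geq K G" and m: "\<And>K'. geq K' G \<Longrightarrow> size K \<le> size K'"
    using ex_has_least_nat[of "\<lambda>K. geq K G" G size] le_refl by (auto simp: geq_def)
  have "canonical K"
    by (rule min_canonical) (use K m geq_trans in blast)
  then show ?thesis using K by blast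
qed

lemma num_total: "is_number x \<Longrightarrow> is_number y \<Longrightarrow> game_le x y \<or> game_le y x"
proof (rule disjCI)
  assume nx: "is_number x" and ny: "is_number y" and h: "\<not> game_le y x"
  then obtain w where "w |\<in>| lefts y \<and> game_le x w \<or> w |\<in>| rights x \<and> game_le w y"
    using le_char[of y x] by blast
  then show "game_le x y"
  proof
    assume "w |\<in>| lefts y \<and> game_le x w"
    then show ?thesis using ny le_trans unfolding is_number_def game_lt_def by blast
  next
    assume "w |\<in>| rights x \<and> game_le w y"
    then show ?thesis using nx le_trans unfolding is_number_def game_lt_def by blast
  qed
qed

lemma max_exists: "finite S \<Longrightarrow> S \<noteq> {} \<Longrightarrow> \<forall>x\<in>S. is_number x \<Longrightarrow> \<exists>m\<in>S. \<forall>x\<in>S. game_le x m"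
proof (induction S rule: finite_ne_induct)
  case (singleton x) then show ?case using le_refl by auto
next
  case (insert x F)
  then obtain m where m: "m \<in> F" "\<forall>y\<in>F. game_le y m" by auto
  show ?case
  proof (cases "game_le x m")
    case True then show ?thesis using m by auto
  next
    case False
    then have "game_le m x" using num_total insert.prems m(1) by blast
    then show ?thesis using m le_trans le_refl by blast
  qed
qed

lemma min_exists: "finite S \<Longrightarrow> S \<noteq> {} \<Longrightarrow> \<forall>x\<in>S. is_number x \<Longrightarrow> \<exists>m\<in>S. \<forall>x\<in>S. game_le m x"
proof (induction S rule: finite_ne_induct)
  case (singleton x) then show ?case using le_refl by auto
next
  case (insert x F)
  then obtain m where m: "m \<in> F" "\<forall>y\<in>F. game_le m y" by auto
  show ?case
  proof (cases "game_le m x")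
    case True then show ?thesis using m by auto
  next
    case False
    then have "game_le x m" using num_total insert.prems m(1) by blast
    then show ?thesis using m le_trans le_refl by blast
  qed
qed

lemma canon_number:
  assumes c: "canonical K" and g: "geq K x0" and n: "is_number x0"
  shows "is_number K"
proof -
  obtain L R where K: "K = Game L R" by (cases K)
  have Kx: "game_le K x0" and xK: "game_le x0 K" using g by (auto simp: geq_def)
  have nrev: "\<not> game_le z K" if "k |\<in>| L" "z |\<in>| rights k" for k z
    using c that K by simp
  have nrevR: "\<not> game_le K z" if "k |\<in>| R" "z |\<in>| lefts k" for k z
    using c that K by simp
  have "game_lt k K" if k: "k |\<in>| lefts K" for k
  proof -
    have "\<not> game_le x0 k" using Kx k by (subst (asm) le_char) auto
    then obtain w where "w |\<in>| lefts x0 \<and> game_le k w \<or> w |\<in>| rights k \<and> game_le w x0"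
      using le_char[of x0 k] by blast
    then have "game_le k K"
    proof
      assume "w |\<in>| lefts x0 \<and> game_le k w"
      then show ?thesis using n xK le_trans unfolding is_number_def game_lt_def by blast
    next
      assume "w |\<in>| rights k \<and> game_le w x0"
      then have "game_le w K" using le_trans xK by blast
      then show ?thesis using nrev k K \<open>w |\<in>| rights k \<and> game_le w x0\<close> by auto
    qed
    then show ?thesis using left_not_ge[OF k] by (simp add: game_lt_def)
  qed
  moreover have "game_lt K r" if r: "r |\<in>| rights K" for r
  proof -
    have "\<not> game_le r x0" using xK r by (subst (asm) le_char) auto
    then obtain w where "w |\<in>| lefts r \<and> game_le x0 w \<or> w |\<in>| rights x0 \<and> game_le w r"
      using le_char[of r x0] by blast
    then have "game_le K r"
    proof
      assume "w |\<in>| rights x0 \<and> game_le w r"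
      then show ?thesis using n Kx le_trans unfolding is_number_def game_lt_def by blast
    next
      assume "w |\<in>| lefts r \<and> game_le x0 w"
      then have "game_le K w" using le_trans Kx by blast
      then show ?thesis using nrevR r K \<open>w |\<in>| lefts r \<and> game_le x0 w\<close> by auto
    qed
    then show ?thesis using right_not_le[OF r] by (simp add: game_lt_def)
  qed
  ultimately show ?thesis unfolding is_number_def by blast
qed

theorem proposition2p8:
  fixes G :: game
  assumes "\<forall>x. x |\<in>| lefts G \<longrightarrow> is_number x"
      and "\<forall>x. x |\<in>| rights G \<longrightarrow> is_number x"
      and "lefts G \<noteq> {||}"
      and "rights G \<noteq> {||}"
  shows "\<exists>a b. is_number a \<and> canonical a \<and> is_number b \<and> canonical b
               \<and> equiv_dom G (Game {|a|} {|b|})"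
proof -
  obtain xa where xa: "xa |\<in>| lefts G" "\<forall>x. x |\<in>| lefts G \<longrightarrow> game_le x xa"
    using max_exists[of "fset (lefts G)"] assms(1,3) by auto
  obtain xb where xb: "xb |\<in>| rights G" "\<forall>x. x |\<in>| rights G \<longrightarrow> game_le xb x"
    using min_exists[of "fset (rights G)"] assms(2,4) by auto
  obtain a where a: "canonical a" "geq a xa" using canon_exists by blast
  obtain b where b: "canonical b" "geq b xb" using canon_exists by blast
  have na: "is_number a" using canon_number[OF a] assms(1) xa(1) by blast
  have nb: "is_number b" using canon_number[OF b] assms(2) xb(1) by blast
  have "equiv_dom G (Game {|a|} {|b|})"
    unfolding equiv_dom_def
    using xa xb a b le_trans unfolding geq_def
    by (simp add: notwinsT notwinsF) blast
  then show ?thesis using na nb a b by blast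
qed

end
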